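(* Every signed $Z_4$-colourable graph is $\{1,1,2\}$-choosable.
   Context: A signed graph is a pair $(G,\sigma)$ with $\sigma:E(G)\to\{-1,+1\}$. A $Z_4$-colouring of $(G,\sigma)$ is a map $f:V(G)\to\mathbb Z_4$ such that $f(x)\ne\sigma(e)f(y)$ in $\mathbb Z_4$ for every edge $e=xy$. $G$ is signed $Z_4$-colourable if $(G,\sigma)$ has a $Z_4$-colouring for every signature $\sigma$. For a partition $\lambda=\{k_1,\dots,k_q\}$ of $k$, a $\lambda$-assignment of $G$ is an assignment $L$ with $|L(v)|=k$ for all $v$ such that $\bigcup_vL(v)$ can be partitioned into sets $C_1,\dots,C_q$ with $|L(v)\cap C_i|=k_i$ for all $v$ and $i$; $G$ is $\lambda$-choosable if for every $\lambda$-assignment $L$ there is a proper colouring $f$ with $f(v)\in L(v)$ for all $v$. *)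

theory Defs
  imports Main "HOL-Library.Numeral_Type"
begin

definition simple_graph :: "'a set \<Rightarrow> ('a \<Rightarrow> 'a \<Rightarrow> bool) \<Rightarrow> bool" where
  "simple_graph V E \<longleftrightarrow> finite V \<and> (\<forall>x y. E x y \<longrightarrow> x \<in> V \<and> y \<in> V)
     \<and> (\<forall>x y. E x y \<longrightarrow> E y x) \<and> (\<forall>x. \<not> E x x)"

definition signature :: "'a set \<Rightarrow> ('a \<Rightarrow> 'a \<Rightarrow> bool) \<Rightarrow> ('a \<Rightarrow> 'a \<Rightarrow> bool) \<Rightarrow> bool" where
  "signature V E \<sigma> \<longleftrightarrow> (\<forall>x y. E x y \<longrightarrow> \<sigma> x y = \<sigma> y x)"

definition sign_val :: "bool \<Rightarrow> 4" where
  "sign_val s = (if s then 1 else -1)"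

definition Z4_colouring :: "'a set \<Rightarrow> ('a \<Rightarrow> 'a \<Rightarrow> bool) \<Rightarrow> ('a \<Rightarrow> 'a \<Rightarrow> bool) \<Rightarrow> ('a \<Rightarrow> 4) \<Rightarrow> bool" where
  "Z4_colouring V E \<sigma> f \<longleftrightarrow> (\<forall>x y. E x y \<longrightarrow> f x \<noteq> sign_val (\<sigma> x y) * f y)"

definition signed_Z4_colourable :: "'a set \<Rightarrow> ('a \<Rightarrow> 'a \<Rightarrow> bool) \<Rightarrow> bool" where
  "signed_Z4_colourable V E \<longleftrightarrow>
     (\<forall>\<sigma>. signature V E \<sigma> \<longrightarrow> (\<exists>f. Z4_colouring V E \<sigma> f))"

text \<open>A partition \<lambda> = {k_1,...,k_q} of k is given as a list ks of its parts;
k = sum_list ks.\<close>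
definition lambda_assignment :: "nat list \<Rightarrow> 'a set \<Rightarrow> ('a \<Rightarrow> 'c set) \<Rightarrow> bool" where
  "lambda_assignment ks V L \<longleftrightarrow>
     (\<forall>v\<in>V. finite (L v) \<and> card (L v) = sum_list ks) \<and>
     (\<exists>C :: nat \<Rightarrow> 'c set.
        (\<Union>i<length ks. C i) = (\<Union>v\<in>V. L v) \<and>
        (\<forall>i<length ks. \<forall>j<length ks. i \<noteq> j \<longrightarrow> C i \<inter> C j = {}) \<and>
        (\<forall>v\<in>V. \<forall>i<length ks. card (L v \<inter> C i) = ks ! i))"

definition lambda_choosable :: "nat list \<Rightarrow> 'a set \<Rightarrow> ('a \<Rightarrow> 'a \<Rightarrow> bool) \<Rightarrow> 'c itself \<Rightarrow> bool" where
  "lambda_choosable ks V E _ \<longleftrightarrow>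
     (\<forall>L :: 'a \<Rightarrow> 'c set. lambda_assignment ks V L \<longrightarrow>
        (\<exists>f. (\<forall>v\<in>V. f v \<in> L v) \<and> (\<forall>x y. E x y \<longrightarrow> f x \<noteq> f y)))"

end

theory Submission
  imports Defs
begin

lemma four_cases: "(z::4) = 0 \<or> z = 1 \<or> z = 2 \<or> z = 3"
proof (cases z)
  case (of_int za)
  then have "za = 0 \<or> za = 1 \<or> za = 2 \<or> za = 3" by auto
  then show ?thesis using of_int by auto
qed

lemma card1_ex: "card A = Suc 0 \<Longrightarrow> \<exists>x. x \<in> A"
  by (auto simp: card_Suc_eq)

lemma card2_ex: "card A = 2 \<Longrightarrow> \<exists>c d. c \<in> A \<and> d \<in> A \<and> c \<noteq> d"
  by (auto simp: card_2_iff)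

theorem theorem12:
  fixes V :: "'a set" and E :: "'a \<Rightarrow> 'a \<Rightarrow> bool"
  assumes "simple_graph V E"
    and "signed_Z4_colourable V E"
  shows "lambda_choosable [1, 1, 2] V E TYPE('c)"
  unfolding lambda_choosable_def
proof (intro allI impI)
  fix L :: "'a \<Rightarrow> 'c set"
  assume "lambda_assignment [1, 1, 2] V L"
  then obtain C :: "nat \<Rightarrow> 'c set" where
    disj: "\<forall>i<3. \<forall>j<3. i \<noteq> j \<longrightarrow> C i \<inter> C j = {}" and
    cards: "\<forall>v\<in>V. \<forall>i<3. card (L v \<inter> C i) = [1,1,2::nat] ! i"
    unfolding lambda_assignment_def by (auto simp: numeral_3_eq_3)
  define a where "a v = (SOME x. x \<in> L v \<inter> C 0)" for v
  define b where "b v = (SOME x. x \<in> L v \<inter> C 1)" for v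
  define p where "p v = (SOME q. fst q \<in> L v \<inter> C 2 \<and> snd q \<in> L v \<inter> C 2 \<and> fst q \<noteq> snd q)" for v
  define c where "c v = fst (p v)" for v
  define d where "d v = snd (p v)" for v
  have A: "a v \<in> L v \<inter> C 0" if "v \<in> V" for v
  proof -
    have "card (L v \<inter> C 0) = Suc 0" using cards that by fastforce
    from card1_ex[OF this] show ?thesis unfolding a_def by (rule someI_ex)
  qed
  have B: "b v \<in> L v \<inter> C 1" if "v \<in> V" for v
  proof -
    have "card (L v \<inter> C 1) = Suc 0" using cards that by fastforce
    from card1_ex[OF this] show ?thesis unfolding b_def by (rule someI_ex)
  qed
  have CD: "c v \<in> L v \<inter> C 2 \<and> d v \<in> L v \<inter> C 2 \<and> c v \<noteq> d v" if "v \<in> V" for v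
  proof -
    have "card (L v \<inter> C 2) = 2" using cards that by fastforce
    from card2_ex[OF this] obtain x y where "x \<in> L v \<inter> C 2" "y \<in> L v \<inter> C 2" "x \<noteq> y" by blast
    then have "\<exists>q. fst q \<in> L v \<inter> C 2 \<and> snd q \<in> L v \<inter> C 2 \<and> fst q \<noteq> snd q"
      by (intro exI[of _ "(x,y)"]) auto
    then show ?thesis unfolding c_def d_def p_def by (rule someI_ex)
  qed
  have d01: "C 0 \<inter> C 1 = {}" "C 0 \<inter> C 2 = {}" "C 1 \<inter> C 2 = {}"
    using disj by auto
  define \<sigma> where "\<sigma> x y = (c x = c y \<or> d x = d y)" for x y
  have "signature V E \<sigma>" unfolding signature_def \<sigma>_def by auto
  with assms(2) obtain f where f: "Z4_colouring V E \<sigma> f"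
    unfolding signed_Z4_colourable_def by blast
  define g where "g v = (if f v = 0 then a v else if f v = 2 then b v
      else if f v = 1 then c v else d v)" for v
  have "\<forall>v\<in>V. g v \<in> L v"
    using A B CD unfolding g_def by auto
  moreover have "g x \<noteq> g y" if e: "E x y" for x y
  proof -
    have V: "x \<in> V" "y \<in> V" using assms(1) e unfolding simple_graph_def by auto
    have ne: "f x \<noteq> sign_val (\<sigma> x y) * f y" using f e unfolding Z4_colouring_def by blast
    note Ax = A[OF V(1)] and Ay = A[OF V(2)] and Bx = B[OF V(1)] and By = B[OF V(2)]
      and CDx = CD[OF V(1)] and CDy = CD[OF V(2)]
    show ?thesis
      using four_cases[of "f x"] four_cases[of "f y"] ne Ax Ay Bx By CDx CDy d01
      unfolding g_def sign_val_def \<sigma>_def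
      by (auto split: if_splits)
  qed
  ultimately show "\<exists>f. (\<forall>v\<in>V. f v \<in> L v) \<and> (\<forall>x y. E x y \<longrightarrow> f x \<noteq> f y)"
    by blast
qed

end
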